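(* If $\tilde w\in\widetilde W$ satisfies $\tilde w\alpha>0$ for all $\alpha\in\Delta(L)$, then $L\cap\tilde w^{-1}I^-\tilde w=B_L^-$.
   Context: $k$ a field, $G=\mathrm{GL}_n$, $s$ a variable; $I^-=\{g\in\mathrm{GL}_n(k[s^{-1}]):g|_{s^{-1}=0}\text{ lower triangular}\}$, $I\subset\mathrm{GL}_n(k[[s]])$ the preimage of upper triangular matrices. Affine roots $\alpha_{ij}+r$ have root subgroups $\{1+as^rE_{ij}\}$; an affine root is positive ($>0$) if its root subgroup lies in $I$. $\widetilde W$ = monomial matrices $w\,\mathrm{diag}(s^{\lambda_i})$, acting on affine roots by conjugation. Fix $1\le d\le n$. $L\subset\mathrm{GL}_n(k((s)))$ is the subgroup generated by the diagonal torus $T(k)$ and the root subgroups $\{1+as^{(i-j)/d}E_{ij}\}$, $i\equiv j\bmod d$, $i\ne j$ (isomorphic to $\{g\in\mathrm{GL}_n(k):g_{ij}=0\text{ unless }i\equiv j\bmod d\}$ via $s^{(i-j)/d}E_{ij}\mapsto E_{ij}$). $\Delta(L)=\{\alpha_{i,i+d}-1:1\le i\le n-d\}$ is its set of simple affine roots, and $B_L^-$ is the subgroup of $L$ generated by $T(k)$ and the root subgroups of $L$ with $i>j$. *)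

theory Defs
  imports "HOL-Computational_Algebra.Formal_Laurent_Series" "HOL-Combinatorics.Permutations"
    "Jordan_Normal_Form.Matrix"
begin

text \<open>Matrices are n x n matrices (indices 0..n-1) over k((s)) = 'k fls, s = fls_X.
  The variable s^r (r an integer) is fls_X_intpow r; constants of k embed via fls_const.\<close>

type_synonym 'k lmat = "'k fls mat"

definition invertible_in :: "nat \<Rightarrow> ('k::field fls \<Rightarrow> bool) \<Rightarrow> 'k lmat \<Rightarrow> bool" where
  "invertible_in n R g \<longleftrightarrow> g \<in> carrier_mat n n \<and>
     (\<exists>h \<in> carrier_mat n n. g * h = 1\<^sub>m n \<and> h * g = 1\<^sub>m n \<and>
        (\<forall>i<n. \<forall>j<n. R (g $$ (i,j)) \<and> R (h $$ (i,j))))"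

definition in_poly_sinv :: "'k::field fls \<Rightarrow> bool" where
  "in_poly_sinv f \<longleftrightarrow> (\<forall>m>0. fls_nth f m = 0)"

definition in_power_series :: "'k::field fls \<Rightarrow> bool" where
  "in_power_series f \<longleftrightarrow> (\<forall>m<0. fls_nth f m = 0)"

text \<open>I^-: elements of GL_n(k[s^{-1}]) whose value at s^{-1} = 0 (constant term) is lower triangular.\<close>
definition Iminus :: "nat \<Rightarrow> 'k::field lmat set" where
  "Iminus n = {g. invertible_in n in_poly_sinv g \<and>
                  (\<forall>i<n. \<forall>j<n. i < j \<longrightarrow> fls_nth (g $$ (i,j)) 0 = 0)}"

text \<open>Iwahori I: preimage in GL_n(k[[s]]) of the upper triangular matrices.\<close>
definition Iwahori :: "nat \<Rightarrow> 'k::field lmat set" where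
  "Iwahori n = {g. invertible_in n in_power_series g \<and>
                  (\<forall>i<n. \<forall>j<n. j < i \<longrightarrow> fls_nth (g $$ (i,j)) 0 = 0)}"

text \<open>Root subgroup of the affine root alpha_ij + r: {1 + a s^r E_ij : a in k}.\<close>
definition root_subgroup :: "nat \<Rightarrow> nat \<Rightarrow> nat \<Rightarrow> int \<Rightarrow> 'k::field lmat set" where
  "root_subgroup n i j r = {1\<^sub>m n + mat n n (\<lambda>(p,q). if p = i \<and> q = j
        then fls_const a * fls_X_intpow r else 0) | a. True}"

definition torus :: "nat \<Rightarrow> 'k::field lmat set" where
  "torus n = {mat n n (\<lambda>(p,q). if p = q then fls_const (t p) else 0) | t. \<forall>p<n. t p \<noteq> 0}"

inductive_set gen_subgroup :: "nat \<Rightarrow> 'k::field lmat set \<Rightarrow> 'k lmat set"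
  for n :: nat and S :: "'k lmat set" where
  one: "1\<^sub>m n \<in> gen_subgroup n S"
| gen: "g \<in> S \<Longrightarrow> g \<in> gen_subgroup n S"
| mult: "g \<in> gen_subgroup n S \<Longrightarrow> h \<in> gen_subgroup n S \<Longrightarrow> g * h \<in> gen_subgroup n S"
| inv: "g \<in> gen_subgroup n S \<Longrightarrow> h \<in> carrier_mat n n \<Longrightarrow> g * h = 1\<^sub>m n \<Longrightarrow> h * g = 1\<^sub>m n
        \<Longrightarrow> h \<in> gen_subgroup n S"

definition Lgrp :: "nat \<Rightarrow> nat \<Rightarrow> 'k::field lmat set" where
  "Lgrp n d = gen_subgroup n (torus n \<union>
     \<Union>{root_subgroup n i j ((int i - int j) div int d) | i j.
         i < n \<and> j < n \<and> i \<noteq> j \<and> i mod d = j mod d})"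

definition BLminus :: "nat \<Rightarrow> nat \<Rightarrow> 'k::field lmat set" where
  "BLminus n d = gen_subgroup n (torus n \<union>
     \<Union>{root_subgroup n i j ((int i - int j) div int d) | i j.
         i < n \<and> j < n \<and> i > j \<and> i mod d = j mod d})"

text \<open>Simple affine roots of L (0-based indices): alpha_{i,i+d} - 1, i + d < n,
  represented as triples (i, j, r) for alpha_ij + r.\<close>
definition DeltaL :: "nat \<Rightarrow> nat \<Rightarrow> (nat \<times> nat \<times> int) set" where
  "DeltaL n d = {(i, i + d, -1) | i. i + d < n}"

definition perm_matrix :: "nat \<Rightarrow> (nat \<Rightarrow> nat) \<Rightarrow> 'k::field lmat" where
  "perm_matrix n \<sigma> = mat n n (\<lambda>(p,q). if p = \<sigma> q then 1 else 0)"

definition diag_spow :: "nat \<Rightarrow> (nat \<Rightarrow> int) \<Rightarrow> 'k::field lmat" where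
  "diag_spow n lam = mat n n (\<lambda>(p,q). if p = q then fls_X_intpow (lam p) else 0)"

definition affW :: "nat \<Rightarrow> 'k::field lmat set" where
  "affW n = {perm_matrix n \<sigma> * diag_spow n lam | \<sigma> lam. \<sigma> permutes {..<n}}"

text \<open>The affine root w alpha is positive iff its root subgroup w U_alpha w^{-1} lies in I.\<close>
definition pos_after :: "nat \<Rightarrow> 'k::field lmat \<Rightarrow> 'k lmat \<Rightarrow> nat \<times> nat \<times> int \<Rightarrow> bool" where
  "pos_after n w winv \<alpha> \<longleftrightarrow>
     (case \<alpha> of (i, j, r) \<Rightarrow> (\<lambda>u. w * u * winv) ` root_subgroup n i j r \<subseteq> Iwahori n)"

end

theory Submission imports Defs "Jordan_Normal_Form.Determinant" begin

abbreviation XX :: "int \<Rightarrow> 'k::field fls" where "XX e \<equiv> fls_X_intpow e"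

lemma XX_nth: "fls_nth (XX e :: 'k::field fls) t = (if t = e then 1 else 0)"
  by simp

lemma XX_mult: "(XX a :: 'k::field fls) * XX b = XX (a+b)"
  by (rule fls_X_intpow_times_fls_X_intpow)

lemma XX_0: "(XX 0 :: 'k::field fls) = 1" by simp

lemma fls_const_add': "fls_const (a + b) = fls_const a + (fls_const b :: 'k::field fls)"
  by (intro fls_eqI) simp

lemma fls_const_sum': "fls_const (\<Sum>x\<in>A. f x) = (\<Sum>x\<in>A. (fls_const (f x) :: 'k::field fls))"
  by (induction A rule: infinite_finite_induct) (simp_all add: fls_const_add')

lemma cXf_nth: "fls_nth (fls_const c * XX e * f) t = (c::'k::field) * fls_nth f (t - e)"
proof -
  have h: "XX e * f = fls_shift (-e) f" by (rule fls_X_intpow_times_conv_shift(1))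
  have "fls_const c * XX e * f = fls_const c * fls_shift (-e) f" by (subst mult.assoc, subst h, rule refl)
  hence "fls_nth (fls_const c * XX e * f) t = fls_nth (fls_const c * fls_shift (-e) f) t" by (rule arg_cong)
  also have "\<dots> = c * fls_nth f (t-e)" by (simp only: fls_mult_const_nth fls_shift_nth) simp
  finally show ?thesis .
qed

lemma cX_nth: "fls_nth (fls_const c * XX e) t = (if t = e then (c::'k::field) else 0)"
  using cXf_nth[of c e 1 t] by simp

lemma mult_entry:
  assumes "A \<in> carrier_mat n n" "B \<in> carrier_mat n n" "i < n" "j < n"
  shows "(A*B)$$(i,j) = (\<Sum>m<n. A$$(i,m)*B$$(m,j))"
  using assms by (simp add: scalar_prod_def lessThan_atLeast0)

definition ex :: "nat \<Rightarrow> nat \<Rightarrow> nat \<Rightarrow> int" where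
  "ex d p q = int (p div d) - int (q div d)"

lemma ex_add: "ex d p m + ex d m q = ex d p q" by (simp add: ex_def)
lemma ex_same[simp]: "ex d p p = 0" by (simp add: ex_def)

lemma ex_div:
  assumes "1 \<le> d" "p mod d = q mod d"
  shows "(int p - int q) div int d = ex d p q"
proof -
  have "int p = int d * int (p div d) + int (p mod d)" by (simp flip: of_nat_mult of_nat_add)
  moreover have "int q = int d * int (q div d) + int (q mod d)" by (simp flip: of_nat_mult of_nat_add)
  ultimately have "int p - int q = int d * ex d p q" using assms(2) by (simp add: ex_def algebra_simps)
  thus ?thesis using assms(1) by simp
qed

definition Lform :: "nat \<Rightarrow> nat \<Rightarrow> 'k::field lmat set" where
  "Lform n d = {g \<in> carrier_mat n n. \<exists>a. (\<forall>p<n. \<forall>q<n. g$$(p,q) = fls_const (a p q) * XX (ex d p q))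
      \<and> (\<forall>p<n. \<forall>q<n. p mod d \<noteq> q mod d \<longrightarrow> a p q = 0)}"

lemma term_mult: "fls_const x * XX e1 * (fls_const y * XX e2) = fls_const (x*y) * (XX (e1+e2) :: 'k::field fls)"
  by (intro fls_eqI) (simp only: cXf_nth cX_nth, auto)

lemma Lform_mult:
  assumes g: "g \<in> Lform n d" and h: "h \<in> Lform n d"
  shows "g * h \<in> Lform n d"
proof -
  from g obtain a where gc: "g \<in> carrier_mat n n"
    and ga: "\<forall>p<n. \<forall>q<n. g$$(p,q) = fls_const (a p q) * XX (ex d p q)"
    and pa: "\<forall>p<n. \<forall>q<n. p mod d \<noteq> q mod d \<longrightarrow> a p q = 0" unfolding Lform_def by blast
  from h obtain b where hc: "h \<in> carrier_mat n n"
    and hb: "\<forall>p<n. \<forall>q<n. h$$(p,q) = fls_const (b p q) * XX (ex d p q)"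
    and pb: "\<forall>p<n. \<forall>q<n. p mod d \<noteq> q mod d \<longrightarrow> b p q = 0" unfolding Lform_def by blast
  define c where "c p q = (\<Sum>m<n. a p m * b m q)" for p q
  have 1: "(g*h)$$(p,q) = fls_const (c p q) * XX (ex d p q)" if "p<n" "q<n" for p q
  proof -
    have "(g*h)$$(p,q) = (\<Sum>m<n. g$$(p,m) * h$$(m,q))" using mult_entry[OF gc hc that] .
    also have "\<dots> = (\<Sum>m<n. fls_const (a p m * b m q) * XX (ex d p q))"
      by (rule sum.cong) (simp_all add: ga hb that term_mult ex_add)
    also have "\<dots> = fls_const (c p q) * XX (ex d p q)"
      by (simp add: c_def fls_const_sum' sum_distrib_right)
    finally show ?thesis .
  qed
  have 2: "c p q = 0" if "p<n" "q<n" "p mod d \<noteq> q mod d" for p q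
    unfolding c_def using pa pb that by (intro sum.neutral) (metis lessThan_iff mult_eq_0_iff)
  show ?thesis unfolding Lform_def using gc hc 1 2 by (intro CollectI conjI exI[of _ c]) auto
qed

lemma Lform_inv:
  fixes g h :: "'k::field lmat"
  assumes g: "g \<in> Lform n d" and hc: "h \<in> carrier_mat n n" and gh: "g * h = 1\<^sub>m n"
  shows "h \<in> Lform n d"
proof -
  from g obtain a where gc: "g \<in> carrier_mat n n"
    and ga: "\<forall>p<n. \<forall>q<n. g$$(p,q) = fls_const (a p q) * XX (ex d p q)"
    and pa: "\<forall>p<n. \<forall>q<n. p mod d \<noteq> q mod d \<longrightarrow> a p q = 0" unfolding Lform_def by blast
  define A where "A = (mat n n (\<lambda>(p,q). a p q) :: 'k mat)"
  define H where "H r = (mat n n (\<lambda>(p,q). fls_nth (h$$(p,q)) (ex d p q + r)) :: 'k mat)" for r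
  have Ac: "A \<in> carrier_mat n n" and Hc: "H r \<in> carrier_mat n n" for r by (auto simp: A_def H_def)
  have AH: "A * H r = (if r = 0 then 1\<^sub>m n else 0\<^sub>m n n)" for r
  proof (rule eq_matI)
    fix p q assume "p < dim_row (if r = 0 then 1\<^sub>m n else 0\<^sub>m n n)" "q < dim_col (if r = 0 then 1\<^sub>m n else 0\<^sub>m n n)"
    hence pq: "p < n" "q < n" by (auto split: if_splits)
    have "(A * H r)$$(p,q) = (\<Sum>m<n. a p m * fls_nth (h$$(m,q)) (ex d m q + r))"
      using mult_entry[OF Ac Hc pq] pq by (simp add: A_def H_def)
    also have "\<dots> = fls_nth ((g*h)$$(p,q)) (ex d p q + r)"
      unfolding mult_entry[OF gc hc pq] fls_nth_sum
    proof (rule sum.cong)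
      fix m assume "m \<in> {..<n}"
      hence "g$$(p,m) = fls_const (a p m) * XX (ex d p m)" using ga pq by auto
      moreover have "ex d p q + r - ex d p m = ex d m q + r" using ex_add[of d p m q] by linarith
      ultimately show "a p m * fls_nth (h$$(m,q)) (ex d m q + r) = fls_nth (g$$(p,m) * h$$(m,q)) (ex d p q + r)"
        by (simp only: cXf_nth)
    qed simp
    also have "\<dots> = (if r = 0 then 1\<^sub>m n else 0\<^sub>m n n)$$(p,q)"
      using pq by (simp add: gh)
    finally show "(A * H r)$$(p,q) = (if r = 0 then 1\<^sub>m n else 0\<^sub>m n n)$$(p,q)" .
  qed (auto simp: A_def H_def)
  have H0A: "H 0 * A = 1\<^sub>m n" using mat_mult_left_right_inverse[OF Ac Hc[of 0]] AH[of 0] by simp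
  have Hr: "H r = 0\<^sub>m n n" if "r \<noteq> 0" for r
  proof -
    have "H r = (H 0 * A) * H r" using H0A Hc[of r] by simp
    also have "\<dots> = H 0 * (A * H r)" by (rule assoc_mult_mat[OF Hc Ac Hc])
    also have "\<dots> = 0\<^sub>m n n" using AH[of r] that Hc[of 0] by simp
    finally show ?thesis .
  qed
  define P where "P c = (mat n n (\<lambda>(p,q). if p = q \<and> p mod d = c then 1 else 0) :: 'k mat)" for c
  have Pc: "P c \<in> carrier_mat n n" for c by (simp add: P_def)
  have AP: "A * P c = P c * A" for c
  proof (rule eq_matI)
    fix p q assume "p < dim_row (P c * A)" "q < dim_col (P c * A)"
    hence pq: "p < n" "q < n" by (auto simp: P_def A_def)
    have "(A * P c)$$(p,q) = (\<Sum>m<n. (if m = q then a p m * (if q mod d = c then 1 else 0) else 0))"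
      unfolding mult_entry[OF Ac Pc pq] using pq by (intro sum.cong) (auto simp: A_def P_def)
    also have "\<dots> = a p q * (if q mod d = c then 1 else 0)" using pq by simp
    also have "\<dots> = (if p mod d = c then 1 else 0) * a p q" using pa pq by auto
    also have "\<dots> = (\<Sum>m<n. (if m = p then (if p mod d = c then 1 else 0) * a m q else 0))" using pq by simp
    also have "\<dots> = (P c * A)$$(p,q)"
      unfolding mult_entry[OF Pc Ac pq] using pq by (intro sum.cong) (auto simp: A_def P_def)
    finally show "(A * P c)$$(p,q) = (P c * A)$$(p,q)" .
  qed (auto simp: A_def P_def)
  have HP: "H 0 * P c = P c * H 0" for c
  proof -
    have "H 0 * P c = H 0 * P c * (A * H 0)" using AH[of 0] Hc[of 0] Pc[of c] by simp
    also have "\<dots> = H 0 * (P c * A) * H 0"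
      using assoc_mult_mat[OF mult_carrier_mat[OF Hc Pc] Ac Hc] assoc_mult_mat[OF Hc Pc Ac] by simp
    also have "\<dots> = H 0 * (A * P c) * H 0" by (simp add: AP)
    also have "\<dots> = (H 0 * A) * P c * H 0" using assoc_mult_mat[OF Hc Ac Pc] by simp
    also have "\<dots> = P c * H 0" using H0A left_mult_one_mat[OF Pc] by simp
    finally show ?thesis .
  qed
  define b where "b p q = fls_nth (h$$(p,q)) (ex d p q)" for p q
  have pb: "b p q = 0" if pq: "p<n" "q<n" "p mod d \<noteq> q mod d" for p q
  proof -
    have "(H 0 * P (q mod d))$$(p,q) = (P (q mod d) * H 0)$$(p,q)" by (simp add: HP)
    hence "(\<Sum>m<n. H 0 $$(p,m) * P (q mod d) $$ (m,q)) = (\<Sum>m<n. P (q mod d) $$ (p,m) * H 0 $$ (m,q))"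
      using mult_entry[OF Hc Pc pq(1,2)] mult_entry[OF Pc Hc pq(1,2)] by simp
    moreover have "(\<Sum>m<n. H 0 $$(p,m) * P (q mod d) $$ (m,q)) = (\<Sum>m<n. if m = q then H 0 $$ (p,q) else 0)"
      using pq by (intro sum.cong) (auto simp: P_def)
    moreover have "(\<Sum>m<n. P (q mod d) $$ (p,m) * H 0 $$ (m,q)) = (\<Sum>m<n. (0::'k))"
      using pq by (intro sum.cong) (auto simp: P_def)
    ultimately have "H 0 $$ (p,q) = 0" using pq by simp
    thus ?thesis using pq by (simp add: H_def b_def)
  qed
  have hb: "h$$(p,q) = fls_const (b p q) * XX (ex d p q)" if pq: "p<n" "q<n" for p q
  proof (rule fls_eqI)
    fix t
    show "fls_nth (h$$(p,q)) t = fls_nth (fls_const (b p q) * XX (ex d p q)) t"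
    proof (cases "t = ex d p q")
      case True thus ?thesis by (simp only: cX_nth b_def) simp
    next
      case False
      have "H (t - ex d p q) $$ (p,q) = 0" using Hr[of "t - ex d p q"] False pq by simp
      hence "fls_nth (h$$(p,q)) t = 0" using pq by (simp add: H_def)
      thus ?thesis using False by (simp only: cX_nth) simp
    qed
  qed
  show ?thesis unfolding Lform_def using hc hb pb by (intro CollectI conjI exI[of _ b]) auto
qed


lemma el_mult_left:
  fixes g :: "'a::comm_ring_1 mat"
  assumes gc: "g \<in> carrier_mat n n" and "i < n" "j < n" "p < n" "q < n"
  shows "((1\<^sub>m n + mat n n (\<lambda>(p,q). if p = i \<and> q = j then x else 0)) * g)$$(p,q)
         = g$$(p,q) + (if p = i then x * g$$(j,q) else 0)"
proof -
  let ?E = "1\<^sub>m n + mat n n (\<lambda>(p,q). if p = i \<and> q = j then x else 0)"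
  have Ec: "?E \<in> carrier_mat n n" by simp
  have "(?E * g)$$(p,q) = (\<Sum>m<n. (if m = p then g$$(m,q) else 0) + (if m = j then (if p = i then x * g$$(m,q) else 0) else 0))"
    unfolding mult_entry[OF Ec gc assms(4,5)] using assms by (intro sum.cong) (auto simp: distrib_right)
  also have "\<dots> = g$$(p,q) + (if p = i then x * g$$(j,q) else 0)"
    using assms by (simp add: sum.distrib)
  finally show ?thesis .
qed

lemma gen_subgroup_mono:
  assumes "x \<in> gen_subgroup n S" "S \<subseteq> T" shows "x \<in> gen_subgroup n T"
  using assms
proof (induction rule: gen_subgroup.induct)
  case one thus ?case by (simp add: gen_subgroup.one)
next
  case (gen g) thus ?case by (auto intro: gen_subgroup.gen)
next
  case (mult g h) thus ?case by (auto intro: gen_subgroup.mult)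
next
  case (inv g h) thus ?case by (auto intro: gen_subgroup.inv)
qed

lemma one_Lform: "1\<^sub>m n \<in> Lform n d"
  unfolding Lform_def
  by (intro CollectI conjI exI[of _ "\<lambda>p q. if p = q then 1 else 0"]) auto

lemma torus_Lform: "x \<in> torus n \<Longrightarrow> x \<in> Lform n d"
proof -
  assume "x \<in> torus n"
  then obtain t where xd: "x = mat n n (\<lambda>(p,q). if p = q then fls_const (t p) else 0)"
    unfolding torus_def by blast
  show ?thesis unfolding Lform_def xd
    by (intro CollectI conjI exI[of _ "\<lambda>p q. if p = q then t p else 0"]) auto
qed

lemma root_Lform:
  assumes "1 \<le> d" "i < n" "j < n" "i \<noteq> j" "i mod d = j mod d"
    and x: "x \<in> root_subgroup n i j ((int i - int j) div int d)"
  shows "x \<in> Lform n d"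
proof -
  from x obtain c where xd: "x = 1\<^sub>m n + mat n n (\<lambda>(p,q). if p = i \<and> q = j
        then fls_const c * XX ((int i - int j) div int d) else 0)" unfolding root_subgroup_def by blast
  have e: "(int i - int j) div int d = ex d i j" using ex_div assms by blast
  define a where "a p q = (if p = q then 1 else 0) + (if p = i \<and> q = j then c else 0)" for p q
  have "x$$(p,q) = fls_const (a p q) * XX (ex d p q)" if "p<n" "q<n" for p q
    using that assms(4) unfolding xd e a_def by (auto simp: fls_const_add')
  moreover have "a p q = 0" if "p mod d \<noteq> q mod d" for p q using that assms(5) by (auto simp: a_def)
  ultimately show ?thesis unfolding Lform_def using xd by (intro CollectI conjI exI[of _ a]) auto
qed

lemma Lgrp_Lform:
  assumes "1 \<le> d" "x \<in> Lgrp n d" shows "x \<in> Lform n d"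
  using assms(2) unfolding Lgrp_def
proof (induction rule: gen_subgroup.induct)
  case one thus ?case by (rule one_Lform)
next
  case (gen g) thus ?case using root_Lform[OF assms(1)] torus_Lform by blast
next
  case (mult g h) thus ?case using Lform_mult by blast
next
  case (inv g h) thus ?case using Lform_inv by blast
qed

lemma BL_Lgrp: "x \<in> BLminus n d \<Longrightarrow> x \<in> Lgrp n d"
  unfolding BLminus_def Lgrp_def by (erule gen_subgroup_mono) auto


lemma lowtri_inv:
  fixes A B :: "'a::field mat"
  assumes Ac: "A \<in> carrier_mat n n" and Bc: "B \<in> carrier_mat n n" and AB: "A * B = 1\<^sub>m n"
    and lo: "\<forall>i<n. \<forall>j<n. i < j \<longrightarrow> A$$(i,j) = 0"
  shows "\<forall>i<n. A$$(i,i) \<noteq> 0" and "\<forall>i<n. \<forall>j<n. i < j \<longrightarrow> B$$(i,j) = 0"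
proof -
  have "det A * det B = 1" using det_mult[OF Ac Bc] AB by simp
  hence "det A \<noteq> 0" by auto
  moreover have "det A = prod_list (diag_mat A)" using lo Ac by (intro det_lower_triangular) auto
  ultimately have "0 \<notin> set (diag_mat A)" by (simp add: prod_list_zero_iff)
  thus dg: "\<forall>i<n. A$$(i,i) \<noteq> 0" using Ac by (auto simp: diag_mat_def)
  show "\<forall>i<n. \<forall>j<n. i < j \<longrightarrow> B$$(i,j) = 0"
  proof (intro allI impI)
    fix i j assume "i < n" "j < n" "i < j"
    thus "B$$(i,j) = 0"
    proof (induction i rule: less_induct)
      case (less i)
      have "0 = (A*B)$$(i,j)" using AB less.prems by simp
      also have "\<dots> = (\<Sum>m<n. if m = i then A$$(i,i) * B$$(i,j) else 0)"
        unfolding mult_entry[OF Ac Bc less.prems(1,2)]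
      proof (rule sum.cong)
        fix m assume m: "m \<in> {..<n}"
        show "A$$(i,m) * B$$(m,j) = (if m = i then A$$(i,i) * B$$(i,j) else 0)"
        proof (cases "m < i")
          case True thus ?thesis using less.IH[of m] less.prems m by auto
        next
          case False thus ?thesis using lo less.prems m by auto
        qed
      qed simp
      also have "\<dots> = A$$(i,i) * B$$(i,j)" using less.prems by simp
      finally show ?case using dg less.prems by simp
    qed
  qed
qed

lemma poly_mult:
  assumes "in_poly_sinv f" "in_poly_sinv g" shows "in_poly_sinv (f * (g :: 'k::field fls))"
  unfolding in_poly_sinv_def
proof (intro allI impI)
  fix m :: int assume m: "m > 0"
  show "fls_nth (f*g) m = 0" unfolding fls_times_nth(2)
  proof (rule sum.neutral, intro ballI)
    fix i assume "i \<in> {fls_subdegree f..m - fls_subdegree g}"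
    show "fls_nth f i * fls_nth g (m - i) = 0"
    proof (cases "i > 0")
      case True thus ?thesis using assms(1) by (simp add: in_poly_sinv_def)
    next
      case False thus ?thesis using assms(2) m by (simp add: in_poly_sinv_def)
    qed
  qed
qed

lemma poly_mult_0:
  assumes "in_poly_sinv f" "in_poly_sinv g" shows "fls_nth (f * (g :: 'k::field fls)) 0 = fls_nth f 0 * fls_nth g 0"
proof -
  have "fls_nth (f*g) 0 = (\<Sum>i=fls_subdegree f..0 - fls_subdegree g. if i = 0 then fls_nth f 0 * fls_nth g 0 else 0)"
    unfolding fls_times_nth(2)
  proof (rule sum.cong)
    fix i assume "i \<in> {fls_subdegree f..0 - fls_subdegree g}"
    show "fls_nth f i * fls_nth g (0 - i) = (if i = 0 then fls_nth f 0 * fls_nth g 0 else 0)"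
    proof (cases "i > 0")
      case True thus ?thesis using assms(1) by (simp add: in_poly_sinv_def)
    next
      case False thus ?thesis using assms(2) by (simp add: in_poly_sinv_def)
    qed
  qed simp
  also have "\<dots> = fls_nth f 0 * fls_nth g 0"
  proof (cases "fls_nth f 0 = 0 \<or> fls_nth g 0 = 0")
    case True thus ?thesis by auto
  next
    case False
    hence "fls_subdegree f \<le> 0" "fls_subdegree g \<le> 0" by (auto intro: fls_subdegree_leI)
    thus ?thesis by simp
  qed
  finally show ?thesis .
qed

lemma poly_add: "in_poly_sinv f \<Longrightarrow> in_poly_sinv g \<Longrightarrow> in_poly_sinv (f + g)"
  by (simp add: in_poly_sinv_def)

lemma poly_sum: "(\<And>x. x \<in> A \<Longrightarrow> in_poly_sinv (f x)) \<Longrightarrow> in_poly_sinv (\<Sum>x\<in>A. f x)"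
  by (simp add: in_poly_sinv_def fls_nth_sum)

lemma poly_cX: "e \<le> 0 \<Longrightarrow> in_poly_sinv (fls_const c * XX e :: 'k::field fls)"
  by (simp only: in_poly_sinv_def cX_nth) auto

lemma poly_const: "in_poly_sinv (fls_const c :: 'k::field fls)"
  by (simp add: in_poly_sinv_def)

lemma poly_0: "in_poly_sinv (0 :: 'k::field fls)" by (simp add: in_poly_sinv_def)
lemma poly_1: "in_poly_sinv (1 :: 'k::field fls)" by (simp add: in_poly_sinv_def)

lemma Iminus_mult:
  assumes g: "g \<in> Iminus n" and h: "h \<in> Iminus n" shows "g * (h :: 'k::field lmat) \<in> Iminus n"
proof -
  from g obtain g' where gc: "g \<in> carrier_mat n n" and g'c: "g' \<in> carrier_mat n n" and gg': "g * g' = 1\<^sub>m n" "g' * g = 1\<^sub>m n"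
    and gp: "\<forall>i<n. \<forall>j<n. in_poly_sinv (g $$ (i,j)) \<and> in_poly_sinv (g' $$ (i,j))"
    and gl: "\<forall>i<n. \<forall>j<n. i < j \<longrightarrow> fls_nth (g $$ (i,j)) 0 = 0"
    unfolding Iminus_def invertible_in_def by blast
  from h obtain h' where hc: "h \<in> carrier_mat n n" and h'c: "h' \<in> carrier_mat n n" and hh': "h * h' = 1\<^sub>m n" "h' * h = 1\<^sub>m n"
    and hp: "\<forall>i<n. \<forall>j<n. in_poly_sinv (h $$ (i,j)) \<and> in_poly_sinv (h' $$ (i,j))"
    and hl: "\<forall>i<n. \<forall>j<n. i < j \<longrightarrow> fls_nth (h $$ (i,j)) 0 = 0"
    unfolding Iminus_def invertible_in_def by blast
  have c1: "g * h \<in> carrier_mat n n" "h' * g' \<in> carrier_mat n n" using gc hc g'c h'c by auto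
  have i1: "(g * h) * (h' * g') = 1\<^sub>m n"
  proof -
    have "(g * h) * (h' * g') = g * (h * h') * g'"
      using gc hc g'c h'c by (simp add: assoc_mult_mat[of _ n n _ n _ n])
    thus ?thesis using hh' gg' gc by simp
  qed
  have i2: "(h' * g') * (g * h) = 1\<^sub>m n"
  proof -
    have "(h' * g') * (g * h) = h' * (g' * g) * h"
      using gc hc g'c h'c by (simp add: assoc_mult_mat[of _ n n _ n _ n])
    thus ?thesis using hh' gg' h'c by simp
  qed
  have p1: "in_poly_sinv ((g*h) $$ (i,j)) \<and> in_poly_sinv ((h'*g') $$ (i,j))" if "i<n" "j<n" for i j
    unfolding mult_entry[OF gc hc that] mult_entry[OF h'c g'c that]
    using gp hp that by (intro conjI poly_sum poly_mult) auto
  have l1: "fls_nth ((g*h) $$ (i,j)) 0 = 0" if "i<n" "j<n" "i<j" for i j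
    unfolding mult_entry[OF gc hc that(1,2)] fls_nth_sum
  proof (rule sum.neutral, intro ballI)
    fix m assume m: "m \<in> {..<n}"
    show "fls_nth (g$$(i,m) * h$$(m,j)) 0 = 0"
      using gp hp gl hl that m by (cases "i < m") (auto simp: poly_mult_0)
  qed
  show ?thesis unfolding Iminus_def invertible_in_def
    using c1 i1 i2 p1 l1 by blast
qed


lemma Iminus_inv:
  assumes g: "g \<in> Iminus n" and hc: "h \<in> carrier_mat n n" and gh: "g * h = (1\<^sub>m n :: 'k::field lmat)"
  shows "h \<in> Iminus n"
proof -
  from g obtain g' where gc: "g \<in> carrier_mat n n" and g'c: "g' \<in> carrier_mat n n" and gg': "g * g' = 1\<^sub>m n" "g' * g = 1\<^sub>m n"
    and gp: "\<forall>i<n. \<forall>j<n. in_poly_sinv (g $$ (i,j)) \<and> in_poly_sinv (g' $$ (i,j))"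
    and gl: "\<forall>i<n. \<forall>j<n. i < j \<longrightarrow> fls_nth (g $$ (i,j)) 0 = 0"
    unfolding Iminus_def invertible_in_def by blast
  have "g' = g' * (g * h)" using gh g'c by simp
  also have "\<dots> = (g' * g) * h" using assoc_mult_mat[OF g'c gc hc] by simp
  also have "\<dots> = h" using gg' hc by simp
  finally have hg': "h = g'" by simp
  define G0 where "G0 = mat n n (\<lambda>(i,j). fls_nth (g$$(i,j)) 0)"
  define H0 where "H0 = mat n n (\<lambda>(i,j). fls_nth (h$$(i,j)) 0)"
  have G0c: "G0 \<in> carrier_mat n n" and H0c: "H0 \<in> carrier_mat n n" by (auto simp: G0_def H0_def)
  have "G0 * H0 = 1\<^sub>m n"
  proof (rule eq_matI)
    fix i j assume "i < dim_row (1\<^sub>m n :: 'k mat)" "j < dim_col (1\<^sub>m n :: 'k mat)"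
    hence ij: "i < n" "j < n" by auto
    have "(G0 * H0)$$(i,j) = (\<Sum>m<n. fls_nth (g$$(i,m)) 0 * fls_nth (h$$(m,j)) 0)"
      unfolding mult_entry[OF G0c H0c ij] using ij by (simp add: G0_def H0_def)
    also have "\<dots> = fls_nth ((g*h)$$(i,j)) 0"
      unfolding mult_entry[OF gc hc ij] fls_nth_sum using gp hg' ij
      by (intro sum.cong) (auto simp: poly_mult_0)
    also have "\<dots> = (1\<^sub>m n :: 'k mat)$$(i,j)" using gh ij by simp
    finally show "(G0 * H0)$$(i,j) = (1\<^sub>m n :: 'k mat)$$(i,j)" .
  qed (auto simp: G0_def H0_def)
  with lowtri_inv(2)[OF G0c H0c] gl have "\<forall>i<n. \<forall>j<n. i < j \<longrightarrow> H0$$(i,j) = 0"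
    by (auto simp: G0_def)
  hence hl: "\<forall>i<n. \<forall>j<n. i < j \<longrightarrow> fls_nth (h $$ (i,j)) 0 = 0" by (auto simp: H0_def)
  show ?thesis unfolding Iminus_def invertible_in_def
    using hl hc gc gg' gp hg' by blast
qed

lemma Iminus_one: "(1\<^sub>m n :: 'k::field lmat) \<in> Iminus n"
  unfolding Iminus_def invertible_in_def
  by (auto intro!: bexI[of _ "1\<^sub>m n"] simp: poly_0 poly_1)


lemma XX_conj: "XX a * y * XX (-b) = XX (a - b) * (y :: 'k::field fls)"
proof -
  have "XX a * y * XX (-b) = (XX a * XX (-b)) * y" by (simp only: ac_simps)
  also have "XX a * XX (-b) = (XX (a - b) :: 'k fls)" by (simp only: XX_mult) simp
  finally show ?thesis .
qed

lemma shift1_mult: "fls_shift a (1::'k::field fls) * fls_shift b 1 = fls_shift (a+b) 1"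
  using XX_mult[of "-a" "-b"] by (simp add: add.commute)

locale wset =
  fixes n d :: nat and sig :: "nat \<Rightarrow> nat" and lam :: "nat \<Rightarrow> int" and w winv :: "'k::field lmat"
  assumes d1: "1 \<le> d" and perm: "sig permutes {..<n}"
    and wdef: "w = perm_matrix n sig * diag_spow n lam"
    and winvc: "winv \<in> carrier_mat n n" and wwinv: "w * winv = 1\<^sub>m n" and winvw: "winv * w = 1\<^sub>m n"
begin

lemma wc: "w \<in> carrier_mat n n" unfolding wdef by (rule mult_carrier_mat) (auto simp: perm_matrix_def diag_spow_def)

lemma sig_lt: "q < n \<Longrightarrow> sig q < n" using permutes_in_image[OF perm] by auto
lemma sig_eq: "sig a = sig b \<longleftrightarrow> a = b" using permutes_inj[OF perm] by (simp add: inj_eq)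
lemma sig_inv_eq: "(p = sig m) \<longleftrightarrow> (m = inv_into UNIV sig p)"
proof
  assume "p = sig m" thus "m = inv_into UNIV sig p" using permutes_inverses(2)[OF perm, of m] by simp
next
  assume "m = inv_into UNIV sig p" thus "p = sig m" using permutes_inverses(1)[OF perm, of p] by simp
qed
lemma inv_lt: "p < n \<Longrightarrow> inv_into UNIV sig p < n"
  using permutes_in_image[OF permutes_inv[OF perm]] by auto
lemma sig_inv: "sig (inv_into UNIV sig p) = p" by (rule permutes_inverses(1)[OF perm])

lemma w_entry: "p < n \<Longrightarrow> q < n \<Longrightarrow> w$$(p,q) = (if p = sig q then XX (lam q) else 0)"
proof -
  assume pq: "p < n" "q < n"
  have Pc: "(perm_matrix n sig :: 'k lmat) \<in> carrier_mat n n" and Dc: "(diag_spow n lam :: 'k lmat) \<in> carrier_mat n n"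
    by (auto simp: perm_matrix_def diag_spow_def)
  have "w$$(p,q) = (\<Sum>m<n. if m = q then (if p = sig q then XX (lam q) else 0) else 0)"
    unfolding wdef mult_entry[OF Pc Dc pq] using pq
    by (intro sum.cong) (auto simp: perm_matrix_def diag_spow_def)
  thus ?thesis using pq by simp
qed

definition W' :: "'k lmat" where "W' = mat n n (\<lambda>(p,q). if q = sig p then XX (- lam p) else 0)"

lemma W'c: "W' \<in> carrier_mat n n" by (simp add: W'_def)

lemma wW': "w * W' = 1\<^sub>m n"
proof (rule eq_matI)
  fix p q assume "p < dim_row (1\<^sub>m n :: 'k lmat)" "q < dim_col (1\<^sub>m n :: 'k lmat)"
  hence pq: "p < n" "q < n" by auto
  have "(w * W')$$(p,q) = (\<Sum>m<n. if m = inv_into UNIV sig p then (if q = p then 1 else 0) else 0)"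
    unfolding mult_entry[OF wc W'c pq]
  proof (rule sum.cong)
    fix m assume m: "m \<in> {..<n}"
    show "w$$(p,m) * W'$$(m,q) = (if m = inv_into UNIV sig p then (if q = p then 1 else 0) else 0)"
    proof (cases "m = inv_into UNIV sig p")
      case True
      hence "p = sig m" using sig_inv by simp
      thus ?thesis using True m pq by (auto simp: w_entry W'_def shift1_mult)
    next
      case False
      hence "p \<noteq> sig m" using sig_inv_eq by simp
      thus ?thesis using False m pq by (simp add: w_entry)
    qed
  qed simp
  also have "\<dots> = (1\<^sub>m n :: 'k lmat)$$(p,q)" using pq inv_lt by auto
  finally show "(w * W')$$(p,q) = (1\<^sub>m n :: 'k lmat)$$(p,q)" .
qed (use wc in \<open>auto simp: W'_def\<close>)

lemma winv_W': "winv = W'"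
proof -
  have "winv = winv * (w * W')" using wW' winvc by simp
  also have "\<dots> = (winv * w) * W'" using assoc_mult_mat[OF winvc wc W'c] by simp
  also have "\<dots> = W'" using winvw W'c by simp
  finally show ?thesis .
qed

lemma winv_entry: "p < n \<Longrightarrow> q < n \<Longrightarrow> winv$$(p,q) = (if q = sig p then XX (- lam p) else 0)"
  by (simp add: winv_W' W'_def)

lemma wg_entry:
  assumes gc: "g \<in> carrier_mat n n" and a: "a < n" and m: "m < n"
  shows "(w * g)$$(sig a, m) = XX (lam a) * g$$(a,m)"
proof -
  have "(w * g)$$(sig a, m) = (\<Sum>k<n. if k = a then XX (lam a) * g$$(a,m) else 0)"
    unfolding mult_entry[OF wc gc sig_lt[OF a] m]
    by (intro sum.cong) (auto simp: w_entry sig_lt a sig_eq)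
  thus ?thesis using a by simp
qed

lemma conj_entry:
  assumes gc: "g \<in> carrier_mat n n" and a: "a < n" and b: "b < n"
  shows "(w * g * winv)$$(sig a, sig b) = XX (lam a - lam b) * g$$(a,b)"
proof -
  have wgc: "w * g \<in> carrier_mat n n" using wc gc by simp
  have "(w * g * winv)$$(sig a, sig b) = (\<Sum>m<n. if m = b then XX (lam a) * g$$(a,b) * XX (- lam b) else 0)"
    unfolding mult_entry[OF wgc winvc sig_lt[OF a] sig_lt[OF b]]
    by (intro sum.cong) (auto simp: winv_entry wg_entry[OF gc a] sig_lt b sig_eq)
  also have "\<dots> = XX (lam a - lam b) * g$$(a,b)" using b
    by (simp only: sum.delta finite_lessThan lessThan_iff if_True XX_conj)
  finally show ?thesis .
qed


definition ee :: "nat \<Rightarrow> nat \<Rightarrow> int" where "ee p q = lam p - lam q + ex d p q"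
definition posr :: "nat \<Rightarrow> nat \<Rightarrow> bool" where "posr p q \<longleftrightarrow> 0 \<le> ee p q \<and> (ee p q = 0 \<longrightarrow> sig p < sig q)"

lemma XcX_nth: "fls_nth (XX a * (fls_const c * XX b)) t = (if t = a + b then (c::'k) else 0)"
  by (simp only: mult.commute[of "XX a"] cXf_nth XX_nth) auto

lemma simple_pos:
  assumes pa: "\<forall>\<alpha> \<in> DeltaL n d. pos_after n w winv \<alpha>" and i: "i + d < n"
  shows "posr i (i + d)"
proof -
  define u :: "'k lmat" where "u = 1\<^sub>m n + mat n n (\<lambda>(p,q). if p = i \<and> q = i + d then fls_const 1 * XX (-1) else 0)"
  have uc: "u \<in> carrier_mat n n" by (simp add: u_def)
  have uR: "u \<in> root_subgroup n i (i + d) (-1)" unfolding root_subgroup_def u_def by blast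
  have "(i, i + d, -1) \<in> DeltaL n d" using i by (auto simp: DeltaL_def)
  hence "pos_after n w winv (i, i + d, -1)" using pa by blast
  hence "(\<lambda>u. w * u * winv) ` root_subgroup n i (i + d) (-1) \<subseteq> Iwahori n" by (simp add: pos_after_def)
  hence M: "w * u * winv \<in> Iwahori n" using uR by blast
  have i1: "i < n" "i + d < n" using i by auto
  have ne: "i \<noteq> i + d" using d1 by simp
  have exv: "ex d i (i + d) = -1" using d1 by (simp add: ex_def)
  have ent: "(w * u * winv)$$(sig i, sig (i+d)) = XX (lam i - lam (i+d)) * (fls_const 1 * XX (-1))"
    using conj_entry[OF uc i1] i1 ne by (simp add: u_def)
  have nth: "fls_nth ((w * u * winv)$$(sig i, sig (i+d))) t = (if t = ee i (i+d) then 1 else 0)" for t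
    unfolding ent XcX_nth ee_def exv by simp
  have s1: "sig i < n" "sig (i+d) < n" using i1 sig_lt by auto
  from M have ps: "in_power_series ((w * u * winv)$$(sig i, sig (i+d)))"
    using s1 unfolding Iwahori_def invertible_in_def by blast
  have "0 \<le> ee i (i+d)"
  proof (rule ccontr)
    assume "\<not> 0 \<le> ee i (i+d)"
    hence "fls_nth ((w * u * winv)$$(sig i, sig (i+d))) (ee i (i+d)) = 0" using ps by (simp add: in_power_series_def)
    thus False by (simp add: nth)
  qed
  moreover have "sig i < sig (i+d)" if e0: "ee i (i+d) = 0"
  proof (rule ccontr)
    assume "\<not> sig i < sig (i+d)"
    moreover have "sig i \<noteq> sig (i+d)" using ne sig_eq by simp
    ultimately have "sig (i+d) < sig i" by simp
    hence "fls_nth ((w * u * winv)$$(sig i, sig (i+d))) 0 = 0" using M s1 unfolding Iwahori_def by blast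
    thus False using e0 by (simp add: nth)
  qed
  ultimately show ?thesis by (simp add: posr_def)
qed

lemma posr_trans: "posr p q \<Longrightarrow> posr q r \<Longrightarrow> posr p r"
proof -
  assume a: "posr p q" "posr q r"
  have "ee p r = ee p q + ee q r" unfolding ee_def using ex_add[of d p q r] by simp
  thus "posr p r" using a unfolding posr_def by auto
qed

lemma posr_chain:
  assumes pa: "\<forall>\<alpha> \<in> DeltaL n d. pos_after n w winv \<alpha>"
  shows "1 \<le> k \<Longrightarrow> p + k * d < n \<Longrightarrow> posr p (p + k * d)"
proof (induction k)
  case 0 thus ?case by simp
next
  case (Suc k)
  show ?case
  proof (cases "k = 0")
    case True thus ?thesis using simple_pos[OF pa] Suc.prems by simp
  next
    case False
    hence "posr p (p + k * d)" using Suc by simp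
    moreover have "posr (p + k * d) (p + k * d + d)" using simple_pos[OF pa] Suc.prems by simp
    ultimately have "posr p (p + k * d + d)" by (rule posr_trans)
    thus ?thesis by (simp add: algebra_simps)
  qed
qed

lemma posr_lt:
  assumes pa: "\<forall>\<alpha> \<in> DeltaL n d. pos_after n w winv \<alpha>"
    and pq: "p < q" "q < n" "p mod d = q mod d"
  shows "posr p q"
proof -
  have "d dvd q - p" using mod_eq_dvd_iff_nat[of p q d] pq by auto
  then obtain k where k: "q - p = d * k" by blast
  hence "k \<ge> 1" using pq by (cases k) auto
  moreover have "q = p + k * d" using k pq by (simp add: mult.commute)
  ultimately show ?thesis using posr_chain[OF pa, of k p] pq by simp
qed


lemma conj_mult:
  assumes xc: "x \<in> carrier_mat n n" and yc: "y \<in> carrier_mat n n"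
  shows "w * (x * y) * winv = (w * x * winv) * (w * y * winv)"
proof -
  have "(w * x * winv) * (w * y * winv) = (w * x) * (winv * (w * y * winv))"
    using assoc_mult_mat[OF mult_carrier_mat[OF wc xc] winvc mult_carrier_mat[OF mult_carrier_mat[OF wc yc] winvc]] .
  also have "winv * (w * y * winv) = (winv * (w * y)) * winv"
    using assoc_mult_mat[OF winvc mult_carrier_mat[OF wc yc] winvc] by simp
  also have "winv * (w * y) = (winv * w) * y" using assoc_mult_mat[OF winvc wc yc] by simp
  also have "(winv * w) * y = y" using winvw yc by simp
  also have "(w * x) * (y * winv) = ((w * x) * y) * winv"
    using assoc_mult_mat[OF mult_carrier_mat[OF wc xc] yc winvc] by simp
  also have "(w * x) * y = w * (x * y)" using assoc_mult_mat[OF wc xc yc] .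
  finally show ?thesis by simp
qed

lemma conj_one: "w * 1\<^sub>m n * winv = 1\<^sub>m n" using wc wwinv by simp

lemma conj_back:
  assumes xc: "x \<in> carrier_mat n n"
  shows "winv * (w * x * winv) * w = x"
proof -
  have "winv * (w * x * winv) = (winv * (w * x)) * winv"
    using assoc_mult_mat[OF winvc mult_carrier_mat[OF wc xc] winvc] by simp
  also have "winv * (w * x) = (winv * w) * x" using assoc_mult_mat[OF winvc wc xc] by simp
  also have "(winv * w) * x = x" using winvw xc by simp
  also have "x * winv * w = x * (winv * w)" using assoc_mult_mat[OF xc winvc wc] .
  finally show ?thesis using winvw xc by simp
qed

lemma conj_fwd:
  assumes gc: "g \<in> carrier_mat n n"
  shows "w * (winv * g * w) * winv = g"
proof -
  have "w * (winv * g * w) = (w * (winv * g)) * w"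
    using assoc_mult_mat[OF wc mult_carrier_mat[OF winvc gc] wc] by simp
  also have "w * (winv * g) = (w * winv) * g" using assoc_mult_mat[OF wc winvc gc] by simp
  also have "(w * winv) * g = g" using wwinv gc by simp
  also have "g * w * winv = g * (w * winv)" using assoc_mult_mat[OF gc wc winvc] .
  finally show ?thesis using wwinv gc by simp
qed

lemma conj_Iminus:
  assumes xc: "x \<in> carrier_mat n n" and x'c: "x' \<in> carrier_mat n n"
    and xx': "x * x' = 1\<^sub>m n" "x' * x = 1\<^sub>m n"
    and px: "\<And>a b. a < n \<Longrightarrow> b < n \<Longrightarrow> in_poly_sinv ((w * x * winv)$$(sig a, sig b))"
    and px': "\<And>a b. a < n \<Longrightarrow> b < n \<Longrightarrow> in_poly_sinv ((w * x' * winv)$$(sig a, sig b))"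
    and lx: "\<And>a b. a < n \<Longrightarrow> b < n \<Longrightarrow> sig a < sig b \<Longrightarrow> fls_nth ((w * x * winv)$$(sig a, sig b)) 0 = 0"
  shows "w * x * winv \<in> Iminus n"
proof -
  have Mc: "w * x * winv \<in> carrier_mat n n" and M'c: "w * x' * winv \<in> carrier_mat n n"
    using wc xc x'c winvc by auto
  have "(w * x * winv) * (w * x' * winv) = 1\<^sub>m n" using conj_mult[OF xc x'c] xx' conj_one by simp
  moreover have "(w * x' * winv) * (w * x * winv) = 1\<^sub>m n" using conj_mult[OF x'c xc] xx' conj_one by simp
  moreover have "in_poly_sinv ((w * x * winv)$$(p, q)) \<and> in_poly_sinv ((w * x' * winv)$$(p, q))" if "p < n" "q < n" for p q
    using px[of "inv_into UNIV sig p" "inv_into UNIV sig q"] px'[of "inv_into UNIV sig p" "inv_into UNIV sig q"]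
      inv_lt that by (simp add: sig_inv)
  moreover have "fls_nth ((w * x * winv)$$(p, q)) 0 = 0" if "p < n" "q < n" "p < q" for p q
    using lx[of "inv_into UNIV sig p" "inv_into UNIV sig q"] inv_lt that by (simp add: sig_inv)
  ultimately show ?thesis unfolding Iminus_def invertible_in_def using Mc M'c by blast
qed

lemma torus_inv: "(x :: 'k lmat) \<in> torus n \<Longrightarrow> \<exists>x'\<in>torus n. x * x' = 1\<^sub>m n \<and> x' * x = 1\<^sub>m n"
proof -
  assume "x \<in> torus n"
  then obtain t where t: "\<forall>p<n. t p \<noteq> 0" and xd: "x = mat n n (\<lambda>(p,q). if p = q then fls_const (t p) else 0)"
    unfolding torus_def by blast
  define x' :: "'k lmat" where "x' = mat n n (\<lambda>(p,q). if p = q then fls_const (inverse (t p)) else 0)"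
  have x'T: "x' \<in> torus n" unfolding torus_def x'_def using t by (intro CollectI exI[of _ "\<lambda>p. inverse (t p)"]) auto
  have xc: "x \<in> carrier_mat n n" and x'c: "x' \<in> carrier_mat n n" by (auto simp: xd x'_def)
  have "x * x' = 1\<^sub>m n"
  proof (rule eq_matI)
    fix p q assume "p < dim_row (1\<^sub>m n :: 'k lmat)" "q < dim_col (1\<^sub>m n :: 'k lmat)"
    hence pq: "p < n" "q < n" by auto
    have "(x * x')$$(p,q) = (\<Sum>m<n. if m = p then (if p = q then 1 else 0) else 0)"
      unfolding mult_entry[OF xc x'c pq] using t pq by (intro sum.cong) (auto simp: xd x'_def)
    thus "(x * x')$$(p,q) = (1\<^sub>m n :: 'k lmat)$$(p,q)" using pq by simp
  qed (auto simp: xd x'_def)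
  moreover have "x' * x = 1\<^sub>m n"
  proof (rule eq_matI)
    fix p q assume "p < dim_row (1\<^sub>m n :: 'k lmat)" "q < dim_col (1\<^sub>m n :: 'k lmat)"
    hence pq: "p < n" "q < n" by auto
    have "(x' * x)$$(p,q) = (\<Sum>m<n. if m = p then (if p = q then 1 else 0) else 0)"
      unfolding mult_entry[OF x'c xc pq] using t pq by (intro sum.cong) (auto simp: xd x'_def)
    thus "(x' * x)$$(p,q) = (1\<^sub>m n :: 'k lmat)$$(p,q)" using pq by simp
  qed (auto simp: xd x'_def)
  ultimately show ?thesis using x'T by blast
qed

lemma torus_good:
  assumes "x \<in> torus n"
  shows "(\<forall>a<n. \<forall>b<n. in_poly_sinv ((w * x * winv)$$(sig a, sig b)))
       \<and> (\<forall>a<n. \<forall>b<n. sig a < sig b \<longrightarrow> fls_nth ((w * x * winv)$$(sig a, sig b)) 0 = 0)"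
proof -
  from assms obtain t where xd: "x = mat n n (\<lambda>(p,q). if p = q then fls_const (t p) else 0)"
    unfolding torus_def by blast
  have xc: "x \<in> carrier_mat n n" by (simp add: xd)
  have e: "(w * x * winv)$$(sig a, sig b) = (if a = b then fls_const (t a) else 0)" if "a < n" "b < n" for a b
    using conj_entry[OF xc that] that by (simp add: xd)
  show ?thesis using e by (auto simp: poly_const poly_0 sig_eq)
qed


lemma ee_anti: "ee i j = - ee j i"
  unfolding ee_def using ex_add[of d i j i] by simp

lemma root_good:
  assumes pa: "\<forall>\<alpha> \<in> DeltaL n d. pos_after n w winv \<alpha>"
    and ij: "i < n" "j < n" "j < i" "i mod d = j mod d"
  fixes c :: 'k
  defines "x \<equiv> 1\<^sub>m n + mat n n (\<lambda>(p,q). if p = i \<and> q = j then fls_const c * XX ((int i - int j) div int d) else 0)"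
  shows "(\<forall>a<n. \<forall>b<n. in_poly_sinv ((w * x * winv)$$(sig a, sig b)))
       \<and> (\<forall>a<n. \<forall>b<n. sig a < sig b \<longrightarrow> fls_nth ((w * x * winv)$$(sig a, sig b)) 0 = 0)"
proof -
  have xc: "x \<in> carrier_mat n n" by (simp add: x_def)
  have r: "(int i - int j) div int d = ex d i j" using ex_div[OF d1 ij(4)] .
  have P: "posr j i" using posr_lt[OF pa ij(3) ij(1)] ij(4) by simp
  have eneg: "ee i j \<le> 0" and e0: "ee i j = 0 \<Longrightarrow> sig j < sig i" using P ee_anti[of i j] unfolding posr_def by auto
  have E: "(w * x * winv)$$(sig a, sig b) =
      (if a = i \<and> b = j then XX (lam i - lam j) * (fls_const c * XX (ex d i j)) else if a = b then 1 else 0)"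
    if "a < n" "b < n" for a b
    using conj_entry[OF xc that] that ij(3) by (auto simp: x_def r)
  have N: "fls_nth (XX (lam i - lam j) * (fls_const c * XX (ex d i j))) t = (if t = ee i j then c else 0)" for t
    by (simp only: XcX_nth ee_def)
  have poly1: "in_poly_sinv (XX (lam i - lam j) * (fls_const c * XX (ex d i j)))"
    unfolding in_poly_sinv_def N using eneg by auto
  have "in_poly_sinv ((w * x * winv)$$(sig a, sig b))" if "a < n" "b < n" for a b
    using E[OF that] poly1 by (auto simp: poly_0 poly_1)
  moreover have "fls_nth ((w * x * winv)$$(sig a, sig b)) 0 = 0" if "a < n" "b < n" "sig a < sig b" for a b
  proof -
    have "a \<noteq> b" using that by auto
    moreover have "ee i j \<noteq> 0" if "a = i" "b = j" using e0 that \<open>sig a < sig b\<close> by auto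
    ultimately show ?thesis using E[OF that(1,2)] N by auto
  qed
  ultimately show ?thesis by blast
qed

end

lemma rootel_inv:
  assumes ij: "i < n" "j < n" "i \<noteq> j"
  shows "(1\<^sub>m n + mat n n (\<lambda>(p,q). if p = i \<and> q = j then fls_const c * XX r else 0)) *
         (1\<^sub>m n + mat n n (\<lambda>(p,q). if p = i \<and> q = j then fls_const (-c) * XX r else 0)) = (1\<^sub>m n :: 'k::field lmat)"
proof (rule eq_matI)
  fix p q assume "p < dim_row (1\<^sub>m n :: 'k lmat)" "q < dim_col (1\<^sub>m n :: 'k lmat)"
  hence pq: "p < n" "q < n" by auto
  show "((1\<^sub>m n + mat n n (\<lambda>(p,q). if p = i \<and> q = j then fls_const c * XX r else 0)) *
         (1\<^sub>m n + mat n n (\<lambda>(p,q). if p = i \<and> q = j then fls_const (-c) * XX r else 0)))$$(p,q) = (1\<^sub>m n :: 'k lmat)$$(p,q)"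
    by (subst el_mult_left) (use ij pq in auto)
qed auto


context wset begin

lemma gen_conj:
  assumes pa: "\<forall>\<alpha> \<in> DeltaL n d. pos_after n w winv \<alpha>"
    and g: "g \<in> torus n \<union> \<Union>{root_subgroup n i j ((int i - int j) div int d) | i j.
         i < n \<and> j < n \<and> i > j \<and> i mod d = j mod d}"
  shows "g \<in> carrier_mat n n \<and> w * g * winv \<in> Iminus n"
proof (cases "g \<in> torus n")
  case True
  then obtain g' where g': "g' \<in> torus n" "g * g' = 1\<^sub>m n" "g' * g = 1\<^sub>m n" using torus_inv by blast
  have gc: "g \<in> carrier_mat n n" using True by (auto simp: torus_def)
  have g'c: "g' \<in> carrier_mat n n" using g' by (auto simp: torus_def)
  have A: "w * g * winv \<in> Iminus n"
    apply (rule conj_Iminus[OF gc g'c g'(2,3)])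
    using torus_good[OF True] torus_good[OF g'(1)] by auto
  show ?thesis using A gc by blast
next
  case False
  hence "g \<in> \<Union>{root_subgroup n i j ((int i - int j) div int d) | i j.
         i < n \<and> j < n \<and> i > j \<and> i mod d = j mod d}" using g by blast
  then obtain R where R: "R \<in> {root_subgroup n i j ((int i - int j) div int d) | i j.
         i < n \<and> j < n \<and> i > j \<and> i mod d = j mod d}" and gR0: "g \<in> R" by (rule UnionE)
  from R obtain i j where ij: "i < n" "j < n" "j < i" "i mod d = j mod d"
    and RR: "R = root_subgroup n i j ((int i - int j) div int d)" by blast
  from gR0 obtain c where gd: "g = 1\<^sub>m n + mat n n (\<lambda>(p,q). if p = i \<and> q = j then fls_const c * XX ((int i - int j) div int d) else 0)"
    unfolding RR root_subgroup_def by blast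
  define g' :: "'k lmat" where "g' = 1\<^sub>m n + mat n n (\<lambda>(p,q). if p = i \<and> q = j then fls_const (-c) * XX ((int i - int j) div int d) else 0)"
  have gc: "g \<in> carrier_mat n n" and g'c: "g' \<in> carrier_mat n n" by (auto simp: gd g'_def)
  have ne: "i \<noteq> j" using ij by simp
  have 1: "g * g' = 1\<^sub>m n" unfolding gd g'_def by (rule rootel_inv[OF ij(1,2) ne])
  have 2: "g' * g = 1\<^sub>m n" unfolding gd g'_def using rootel_inv[OF ij(1,2) ne, of "-c" "(int i - int j) div int d"] unfolding minus_minus .
  note G1 = root_good[OF pa ij, of c, folded gd]
  note G2 = root_good[OF pa ij, of "-c", folded g'_def]
  have A: "w * g * winv \<in> Iminus n"
    apply (rule conj_Iminus[OF gc g'c 1 2])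
    using G1 G2 by auto
  show ?thesis using A gc by blast
qed

lemma BL_conj:
  assumes pa: "\<forall>\<alpha> \<in> DeltaL n d. pos_after n w winv \<alpha>"
    and x: "x \<in> BLminus n d"
  shows "x \<in> carrier_mat n n \<and> w * x * winv \<in> Iminus n"
  using x unfolding BLminus_def
proof (induction rule: gen_subgroup.induct)
  case one thus ?case using conj_one Iminus_one by simp
next
  case (gen g) thus ?case using gen_conj[OF pa] by blast
next
  case (mult g h)
  thus ?case using conj_mult[of g h] Iminus_mult by auto
next
  case (inv g h)
  have "(w * g * winv) * (w * h * winv) = 1\<^sub>m n" using conj_mult[of g h] inv conj_one by simp
  moreover have "w * h * winv \<in> carrier_mat n n" using inv wc winvc by auto
  ultimately show ?case using Iminus_inv inv by blast
qed

end


lemma reduce: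
  assumes d1: "1 \<le> d"
  shows "\<forall>(g::'k::field lmat) a. g \<in> carrier_mat n n
     \<and> (\<forall>p<n. \<forall>q<n. g$$(p,q) = fls_const (a p q) * XX (ex d p q))
     \<and> (\<forall>p<n. \<forall>q<n. p mod d \<noteq> q mod d \<longrightarrow> a p q = 0)
     \<and> (\<forall>p<n. \<forall>q<n. p < q \<longrightarrow> a p q = 0)
     \<and> (\<forall>p<n. a p p \<noteq> 0)
     \<and> card {(p,q). p < n \<and> q < p \<and> a p q \<noteq> 0} = N \<longrightarrow> g \<in> BLminus n d"
proof (induction N)
  case 0
  show ?case
  proof (intro allI impI, elim conjE)
    fix g :: "'k lmat" and a
    assume gc: "g \<in> carrier_mat n n" and ga: "\<forall>p<n. \<forall>q<n. g$$(p,q) = fls_const (a p q) * XX (ex d p q)"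
      and la: "\<forall>p<n. \<forall>q<n. p < q \<longrightarrow> a p q = 0" and da: "\<forall>p<n. a p p \<noteq> 0"
      and c0: "card {(p,q). p < n \<and> q < p \<and> a p q \<noteq> 0} = 0"
    have fin: "finite {(p,q). p < n \<and> q < p \<and> a p q \<noteq> 0}"
      by (rule finite_subset[of _ "{..<n} \<times> {..<n}"]) auto
    hence emp: "{(p,q). p < n \<and> q < p \<and> a p q \<noteq> 0} = {}" using c0 by simp
    have z: "a p q = 0" if "p < n" "q < p" for p q
    proof (rule ccontr)
      assume "a p q \<noteq> 0"
      hence "(p,q) \<in> {(p,q). p < n \<and> q < p \<and> a p q \<noteq> 0}" using that by simp
      thus False using emp by simp
    qed
    have "g = mat n n (\<lambda>(p,q). if p = q then fls_const (a p p) else 0)"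
    proof (rule eq_matI)
      fix p q assume "p < dim_row (mat n n (\<lambda>(p,q). if p = q then fls_const (a p p) else (0::'k fls)))"
        "q < dim_col (mat n n (\<lambda>(p,q). if p = q then fls_const (a p p) else (0::'k fls)))"
      hence pq: "p < n" "q < n" by auto
      show "g$$(p,q) = mat n n (\<lambda>(p,q). if p = q then fls_const (a p p) else 0) $$ (p,q)"
      proof (cases "p = q")
        case True thus ?thesis using ga pq by simp
      next
        case False
        hence "a p q = 0" using z la pq by (cases "p < q") auto
        thus ?thesis using ga pq False by simp
      qed
    qed (use gc in auto)
    hence "g \<in> torus n" unfolding torus_def using da by (intro CollectI exI[of _ "\<lambda>p. a p p"]) auto
    thus "g \<in> BLminus n d" unfolding BLminus_def by (auto intro: gen_subgroup.gen)
  qed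
next
  case (Suc N)
  show ?case
  proof (intro allI impI, elim conjE)
    fix g :: "'k lmat" and a
    assume gc: "g \<in> carrier_mat n n" and ga: "\<forall>p<n. \<forall>q<n. g$$(p,q) = fls_const (a p q) * XX (ex d p q)"
      and pa: "\<forall>p<n. \<forall>q<n. p mod d \<noteq> q mod d \<longrightarrow> a p q = 0"
      and la: "\<forall>p<n. \<forall>q<n. p < q \<longrightarrow> a p q = 0" and da: "\<forall>p<n. a p p \<noteq> 0"
      and cS: "card {(p,q). p < n \<and> q < p \<and> a p q \<noteq> 0} = Suc N"
    define S where "S = {(p,q). p < n \<and> q < p \<and> a p q \<noteq> 0}"
    have fin: "finite S" unfolding S_def
      by (rule finite_subset[of _ "{..<n} \<times> {..<n}"]) auto
    have "S \<noteq> {}" using cS unfolding S_def[symmetric] by (metis card.empty nat.distinct(1))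
    then obtain p1 q1 where "(p1, q1) \<in> S" by auto
    hence ex1: "\<exists>p. (p, q1) \<in> S" by blast
    define q0 where "q0 = (LEAST q. \<exists>p. (p,q) \<in> S)"
    have "\<exists>p. (p, q0) \<in> S" unfolding q0_def by (rule LeastI_ex) (rule exI[of _ q1], rule ex1)
    then obtain p0 where p0S: "(p0, q0) \<in> S" by blast
    have mn: "q0 \<le> q'" if "(p', q') \<in> S" for p' q' unfolding q0_def using that by (intro Least_le) blast
    have p0: "p0 < n" "q0 < p0" "a p0 q0 \<noteq> 0" using p0S by (auto simp: S_def)
    have q0n: "q0 < n" using p0 by simp
    have md: "p0 mod d = q0 mod d" using pa p0 q0n by blast
    define a' where "a' x y = (if x = p0 \<and> y = q0 then 0 else a x y)" for x y
    define g' :: "'k lmat" where "g' = mat n n (\<lambda>(x,y). fls_const (a' x y) * XX (ex d x y))"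
    have S': "{(p,q). p < n \<and> q < p \<and> a' p q \<noteq> 0} = S - {(p0,q0)}"
      by (auto simp: a'_def S_def)
    have "card {(p,q). p < n \<and> q < p \<and> a' p q \<noteq> 0} = N"
      unfolding S' using card_Diff_singleton[OF p0S] cS by (simp add: S_def)
    moreover have "g' \<in> carrier_mat n n" by (simp add: g'_def)
    moreover have "\<forall>p<n. \<forall>q<n. g'$$(p,q) = fls_const (a' p q) * XX (ex d p q)" by (simp add: g'_def)
    moreover have "\<forall>p<n. \<forall>q<n. p mod d \<noteq> q mod d \<longrightarrow> a' p q = 0" using pa by (simp add: a'_def)
    moreover have "\<forall>p<n. \<forall>q<n. p < q \<longrightarrow> a' p q = 0" using la by (simp add: a'_def)
    moreover have "\<forall>p<n. a' p p \<noteq> 0" using da p0 by (simp add: a'_def)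
    ultimately have g'B: "g' \<in> BLminus n d" using Suc.IH by blast
    define c where "c = a p0 q0 / a q0 q0"
    have cq: "c * a q0 q0 = a p0 q0" using da q0n by (simp add: c_def)
    define E :: "'k lmat" where "E = 1\<^sub>m n + mat n n (\<lambda>(x,y). if x = p0 \<and> y = q0 then fls_const c * XX ((int p0 - int q0) div int d) else 0)"
    have r: "(int p0 - int q0) div int d = ex d p0 q0" using ex_div[OF d1 md] .
    have ER: "E \<in> root_subgroup n p0 q0 ((int p0 - int q0) div int d)" unfolding E_def root_subgroup_def by blast
    have "root_subgroup n p0 q0 ((int p0 - int q0) div int d) \<in> {root_subgroup n i j ((int i - int j) div int d) | i j.
         i < n \<and> j < n \<and> i > j \<and> i mod d = j mod d}" using p0 q0n md by blast
    hence "E \<in> torus n \<union> \<Union>{root_subgroup n i j ((int i - int j) div int d) | i j.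
         i < n \<and> j < n \<and> i > j \<and> i mod d = j mod d}" using ER by blast
    hence EB: "E \<in> BLminus n d" unfolding BLminus_def by (rule gen_subgroup.gen)
    have g'c: "g' \<in> carrier_mat n n" by (simp add: g'_def)
    have "g = E * g'"
    proof (rule eq_matI)
      fix x y assume "x < dim_row (E * g')" "y < dim_col (E * g')"
      hence xy: "x < n" "y < n" by (auto simp: E_def g'_def)
      have Eg: "(E * g')$$(x,y) = g'$$(x,y) + (if x = p0 then fls_const c * XX ((int p0 - int q0) div int d) * g'$$(q0,y) else 0)"
        unfolding E_def by (rule el_mult_left[OF g'c p0(1) q0n xy])
      show "g$$(x,y) = (E * g')$$(x,y)"
      proof (cases "x = p0")
        case False thus ?thesis unfolding Eg using xy ga by (simp add: g'_def a'_def)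
      next
        case True
        show ?thesis
        proof (cases "y = q0")
          case False
          have "a q0 y = 0"
          proof (cases "q0 < y")
            case True thus ?thesis using la q0n xy by blast
          next
            case False2: False
            show ?thesis
            proof (rule ccontr)
              assume "a q0 y \<noteq> 0"
              hence "(q0, y) \<in> S" using False False2 q0n xy by (auto simp: S_def)
              hence "q0 \<le> y" by (rule mn)
              thus False using False False2 by simp
            qed
          qed
          hence "g'$$(q0,y) = 0" using q0n xy p0 by (simp add: g'_def a'_def)
          thus ?thesis unfolding Eg using xy ga True False by (simp add: g'_def a'_def)
        next
          case True2: True
          have "g'$$(q0,q0) = fls_const (a q0 q0)" using q0n p0 by (simp add: g'_def a'_def)
          moreover have "g'$$(p0,q0) = 0" using q0n p0 by (simp add: g'_def a'_def)
          moreover have "fls_const c * XX (ex d p0 q0) * fls_const (a q0 q0) = fls_const (a p0 q0) * (XX (ex d p0 q0) :: 'k fls)"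
            using cq by (metis fls_const_mult_const mult.assoc mult.commute)
          ultimately show ?thesis unfolding Eg r using xy ga True True2 by simp
        qed
      qed
    qed (use gc in \<open>auto simp: E_def g'_def\<close>)
    thus "g \<in> BLminus n d" using EB g'B unfolding BLminus_def by (simp add: gen_subgroup.mult)
  qed
qed


context wset begin

lemma hard:
  assumes pa: "\<forall>\<alpha> \<in> DeltaL n d. pos_after n w winv \<alpha>"
    and xL: "x \<in> Lgrp n d" and g'I: "g' \<in> Iminus n" and xd: "x = winv * g' * w"
  shows "x \<in> BLminus n d"
proof -
  from g'I obtain g'' where g'c: "g' \<in> carrier_mat n n" and g''c: "g'' \<in> carrier_mat n n"
    and g'g'': "g' * g'' = 1\<^sub>m n"
    and gp: "\<forall>i<n. \<forall>j<n. in_poly_sinv (g' $$ (i,j)) \<and> in_poly_sinv (g'' $$ (i,j))"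
    and gl: "\<forall>i<n. \<forall>j<n. i < j \<longrightarrow> fls_nth (g' $$ (i,j)) 0 = 0"
    unfolding Iminus_def invertible_in_def by blast
  have conj: "w * x * winv = g'" using conj_fwd[OF g'c] xd by simp
  from Lgrp_Lform[OF d1 xL] obtain a where xc: "x \<in> carrier_mat n n"
    and xa: "\<forall>p<n. \<forall>q<n. x$$(p,q) = fls_const (a p q) * XX (ex d p q)"
    and pat: "\<forall>p<n. \<forall>q<n. p mod d \<noteq> q mod d \<longrightarrow> a p q = 0" unfolding Lform_def by blast
  have la: "a p q = 0" if pq: "p < n" "q < n" "p < q" for p q
  proof (cases "p mod d = q mod d")
    case False thus ?thesis using pat pq by blast
  next
    case True
    have P: "posr p q" using posr_lt[OF pa pq(3) pq(2) True] .
    have E: "g'$$(sig p, sig q) = XX (lam p - lam q) * (fls_const (a p q) * XX (ex d p q))"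
      using conj_entry[OF xc pq(1,2)] conj xa pq by simp
    have N: "fls_nth (g'$$(sig p, sig q)) t = (if t = ee p q then a p q else 0)" for t
      unfolding E by (simp only: XcX_nth ee_def)
    have sp: "sig p < n" "sig q < n" using sig_lt pq by auto
    show ?thesis
    proof (cases "ee p q = 0")
      case True
      hence "sig p < sig q" using P by (simp add: posr_def)
      hence "fls_nth (g'$$(sig p, sig q)) 0 = 0" using gl sp by blast
      thus ?thesis using N[of 0] True by simp
    next
      case False
      hence "ee p q > 0" using P by (simp add: posr_def)
      hence "fls_nth (g'$$(sig p, sig q)) (ee p q) = 0" using gp sp by (simp add: in_poly_sinv_def)
      thus ?thesis using N[of "ee p q"] by simp
    qed
  qed
  define y where "y = winv * g'' * w"
  have yc: "y \<in> carrier_mat n n" using winvc g''c wc by (simp add: y_def)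
  have "w * (x * y) * winv = (w * x * winv) * (w * y * winv)" by (rule conj_mult[OF xc yc])
  also have "\<dots> = g' * g''" using conj conj_fwd[OF g''c] by (simp add: y_def)
  finally have "w * (x * y) * winv = 1\<^sub>m n" using g'g'' by simp
  hence xy: "x * y = 1\<^sub>m n" using conj_back[of "x * y"] xc yc winvc winvw by simp
  have lo: "\<forall>i<n. \<forall>j<n. i < j \<longrightarrow> x$$(i,j) = 0" using la xa by simp
  have "\<forall>i<n. x$$(i,i) \<noteq> 0" by (rule lowtri_inv(1)[OF xc yc xy lo])
  hence da: "\<forall>p<n. a p p \<noteq> 0" using xa by (auto simp: fls_const_nonzero)
  note R = reduce[OF d1, of n "card {(p,q). p < n \<and> q < p \<and> a p q \<noteq> 0}"]
  show ?thesis
    apply (rule mp[OF spec[OF spec[OF R, of x], of a]])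
    apply (intro conjI)
    using xc xa pat da by (auto intro: la)
qed

end

theorem lemma10p3:
  fixes n d :: nat and w winv :: "'k::field lmat"
  assumes "1 \<le> d" and "d \<le> n"
    and "w \<in> affW n"
    and "winv \<in> carrier_mat n n" and "w * winv = 1\<^sub>m n" and "winv * w = 1\<^sub>m n"
    and "\<forall>\<alpha> \<in> DeltaL n d. pos_after n w winv \<alpha>"
  shows "Lgrp n d \<inter> {winv * g * w | g. g \<in> Iminus n} = BLminus n d"
proof -
  from assms(3) obtain sig lam where perm: "sig permutes {..<n}" and wd: "w = perm_matrix n sig * diag_spow n lam"
    unfolding affW_def by blast
  interpret W: wset n d sig lam w winv
    using assms(1,4,5,6) perm wd by unfold_locales auto
  show ?thesis
  proof (intro equalityI subsetI)
    fix x assume "x \<in> Lgrp n d \<inter> {winv * g * w | g. g \<in> Iminus n}"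
    then obtain g where "x \<in> Lgrp n d" "g \<in> Iminus n" "x = winv * g * w" by blast
    thus "x \<in> BLminus n d" using W.hard[OF assms(7)] by blast
  next
    fix x :: "'k lmat" assume xB: "x \<in> BLminus n d"
    have "x \<in> carrier_mat n n \<and> w * x * winv \<in> Iminus n" by (rule W.BL_conj[OF assms(7) xB])
    hence "x = winv * (w * x * winv) * w" "w * x * winv \<in> Iminus n" using W.conj_back by auto
    hence "x \<in> {winv * g * w | g. g \<in> Iminus n}" by blast
    thus "x \<in> Lgrp n d \<inter> {winv * g * w | g. g \<in> Iminus n}" using BL_Lgrp[OF xB] by blast
  qed
qed

end
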